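(* $\displaystyle\lim_{n\to\infty}\frac{l(2n+1)}{l(2n)}=5.$
   Context: For $n\ge 0$, $c(n)=\sum_{i=0}^{n}\left(\binom{n}{i}\bmod 2\right)2^{i}$, the integer whose binary digits form the $n$-th row of Pascal's triangle modulo $2$ (so $c(0),c(1),\dots=1,3,5,15,17,51,85,255,\dots$); one has $c(2n)\equiv1\pmod4$, and $l(n)=\frac{c(2n)-1}{4}$. (Stated in the paper as a conjecture of R. Stephan and proved there.) *)

theory Defs
  imports Complex_Main
begin

definition pascal_c :: "nat \<Rightarrow> nat" where
  "pascal_c n = (\<Sum>i=0..n. ((n choose i) mod 2) * 2 ^ i)"

text \<open>l n = (c(2n) - 1)/4; c(2n) is 1 mod 4, so the division is exact.\<close>
definition pascal_l :: "nat \<Rightarrow> nat" where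
  "pascal_l n = (pascal_c (2 * n) - 1) div 4"

end

theory Submission
  imports Defs
begin

lemma choose_plus2: "(Suc (Suc n) choose Suc (Suc k)) = (n choose Suc (Suc k)) + 2 * (n choose Suc k) + (n choose k)"
  by simp

lemma par_main: "(even (2*m choose (2*j)) = even (m choose j)) \<and> even (2*m choose (2*j+1))"
proof (induction m arbitrary: j)
  case 0
  then show ?case by (cases j) auto
next
  case (Suc m)
  show ?case
  proof (cases j)
    case 0
    have "2 * Suc m choose 1 = 2 * Suc m" by simp
    then show ?thesis using 0 by simp
  next
    case (Suc i)
    have e1: "2 * Suc m = Suc (Suc (2*m))" by simp
    have a: "(2 * Suc m choose (2*j)) = (2*m choose (2*i+2)) + 2 * (2*m choose (2*i+1)) + (2*m choose (2*i))"
      using choose_plus2[of "2*m" "2*i"] Suc e1 by (simp add: numeral_2_eq_2)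
    have b: "(2 * Suc m choose (2*j+1)) = (2*m choose (2*i+3)) + 2 * (2*m choose (2*i+2)) + (2*m choose (2*i+1))"
      using choose_plus2[of "2*m" "2*i+1"] Suc e1 by (simp add: numeral_3_eq_3 numeral_2_eq_2)
    have h1: "even (2*m choose (2*i+2)) = even (m choose Suc i)" using Suc.IH[of "Suc i"] by simp
    have h2: "even (2*m choose (2*i)) = even (m choose i)" using Suc.IH[of i] by simp
    have h3: "even (2*m choose (2*i+3))" using Suc.IH[of "Suc i"] by (simp add: numeral_3_eq_3)
    have h4: "even (2*m choose (2*i+1))" using Suc.IH[of i] by simp
    have "(Suc m choose j) = (m choose Suc i) + (m choose i)" using Suc by simp
    then have "even (2 * Suc m choose (2*j)) = even (Suc m choose j)"
      using a h1 h2 by simp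
    moreover have "even (2 * Suc m choose (2*j+1))" using b h3 h4 by simp
    ultimately show ?thesis by simp
  qed
qed

lemma par_odd: "(even (Suc (2*m) choose (2*j)) = even (m choose j)) \<and> (even (Suc (2*m) choose (2*j+1)) = even (m choose j))"
proof -
  have A: "(Suc (2*m) choose (2*j+1)) = (2*m choose (2*j)) + (2*m choose (2*j+1))" by simp
  have B: "even (Suc (2*m) choose (2*j)) = even (m choose j)"
  proof (cases j)
    case 0 then show ?thesis by simp
  next
    case (Suc i)
    have "(Suc (2*m) choose (2*j)) = (2*m choose (2*i+1)) + (2*m choose (2*j))" using Suc by simp
    then show ?thesis using par_main[of m i] par_main[of m j] by simp
  qed
  show ?thesis using A B par_main[of m j] by simp
qed

lemma mod2_eq: "even (a::nat) = even b \<Longrightarrow> a mod 2 = b mod 2"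
  by (metis even_iff_mod_2_eq_zero odd_iff_mod_2_eq_one)

lemma par_main': "(2*m choose (2*j)) mod 2 = (m choose j) mod 2" "(2*m choose (2*j+1)) mod 2 = 0"
proof -
  show "(2*m choose (2*j)) mod 2 = (m choose j) mod 2" by (rule mod2_eq) (use par_main[of m j] in simp)
  show "(2*m choose (2*j+1)) mod 2 = 0" using par_main[of m j] by simp
qed

lemma par_odd': "(Suc (2*m) choose (2*j)) mod 2 = (m choose j) mod 2" "(Suc (2*m) choose (2*j+1)) mod 2 = (m choose j) mod 2"
proof -
  show "(Suc (2*m) choose (2*j)) mod 2 = (m choose j) mod 2" by (rule mod2_eq) (use par_odd[of m j] in simp)
  show "(Suc (2*m) choose (2*j+1)) mod 2 = (m choose j) mod 2" by (rule mod2_eq) (use par_odd[of m j] in simp)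
qed

definition P :: "nat \<Rightarrow> nat \<Rightarrow> nat" where
  "P K m = (\<Sum>i<K. ((m choose i) mod 2) * 2 ^ i)"

lemma c_P: "m < K \<Longrightarrow> pascal_c m = P K m"
proof -
  assume "m < K"
  have "P K m = (\<Sum>i\<in>{0..m}. ((m choose i) mod 2) * 2 ^ i)"
    unfolding P_def
    by (rule sum.mono_neutral_right) (use \<open>m < K\<close> in \<open>auto simp: binomial_eq_0\<close>)
  then show ?thesis by (simp add: pascal_c_def)
qed

lemma sum_split2: "(\<Sum>i<2*(K::nat). f i) = (\<Sum>j<K. f (2*j) + f (2*j+1)::nat)"
  by (induction K) (auto simp: numeral_2_eq_2)

lemma P_even: "P (2*K) (2*m) = (\<Sum>j<K. ((m choose j) mod 2) * 4 ^ j)"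
  unfolding P_def sum_split2
  apply (rule sum.cong, simp)
  using par_main' by (simp add: power_mult)

lemma c4: "pascal_c (4*n+2) = 5 * pascal_c (4*n)"
proof -
  have "pascal_c (4*n+2) = P (2*(2*(n+1))) (2*(2*n+1))"
  proof -
    have e: "4*n+2 = 2*(2*n+1)" by simp
    have "2*(2*n+1) < 2*(2*(n+1))" by simp
    then have "pascal_c (2*(2*n+1)) = P (2*(2*(n+1))) (2*(2*n+1))" by (rule c_P)
    then show ?thesis unfolding e .
  qed
  also have "\<dots> = (\<Sum>j<2*(n+1). ((2*n+1) choose j) mod 2 * 4^j)" by (rule P_even)
  also have "\<dots> = (\<Sum>k<n+1. (n choose k) mod 2 * 16^k * 5)"
    unfolding sum_split2 apply (rule sum.cong, simp)
    using par_odd' by (simp add: power_mult power_add)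
  finally have 1: "pascal_c (4*n+2) = 5 * (\<Sum>k<n+1. (n choose k) mod 2 * 16^k)"
    by (simp add: sum_distrib_left mult.commute)
  have "pascal_c (4*n) = P (2*(2*(n+1))) (2*(2*n))"
  proof -
    have e: "4*n = 2*(2*n)" by simp
    have "2*(2*n) < 2*(2*(n+1))" by simp
    then have "pascal_c (2*(2*n)) = P (2*(2*(n+1))) (2*(2*n))" by (rule c_P)
    then show ?thesis unfolding e .
  qed
  also have "\<dots> = (\<Sum>j<2*(n+1). ((2*n) choose j) mod 2 * 4^j)" by (rule P_even)
  also have "\<dots> = (\<Sum>k<n+1. (n choose k) mod 2 * 16^k)"
    unfolding sum_split2 apply (rule sum.cong, simp)
    using par_main' by (simp add: power_mult)
  finally show ?thesis using 1 by simp
qed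

lemma c4mod: "pascal_c (4*n) mod 4 = 1"
proof -
  define f where "f = (\<lambda>j. ((2*n) choose j) mod 2 * (4::nat)^j)"
  have "pascal_c (4*n) = P (2*(2*n+1)) (2*(2*n))"
  proof -
    have e: "4*n = 2*(2*n)" by simp
    have "2*(2*n) < 2*(2*n+1)" by simp
    then have "pascal_c (2*(2*n)) = P (2*(2*n+1)) (2*(2*n))" by (rule c_P)
    then show ?thesis unfolding e .
  qed
  also have "\<dots> = (\<Sum>j<2*n+1. f j)" unfolding f_def by (rule P_even)
  also have "\<dots> = f 0 + (\<Sum>j<2*n. f (Suc j))" by (simp only: Suc_eq_plus1[symmetric] sum.lessThan_Suc_shift)
  also have "(\<Sum>j<2*n. f (Suc j)) = 4 * (\<Sum>j<2*n. ((2*n) choose (Suc j)) mod 2 * 4^j)"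
    unfolding f_def sum_distrib_left by (rule sum.cong) auto
  finally show ?thesis unfolding f_def by simp
qed

lemma c_ge: "pascal_c m \<ge> 2 ^ m"
proof -
  have "2 ^ m = ((m choose m) mod 2) * 2 ^ m" by simp
  also have "\<dots> \<le> pascal_c m" unfolding pascal_c_def
    by (rule member_le_sum) auto
  finally show ?thesis .
qed

lemma l_rec: "pascal_l (2*n+1) = 5 * pascal_l (2*n) + 1"
proof -
  obtain q where q: "pascal_c (4*n) = 4*q+1" using c4mod[of n] by (metis mod_div_mult_eq add.commute mult.commute)
  have "pascal_l (2*n) = q" unfolding pascal_l_def using q by simp
  moreover have "pascal_l (2*n+1) = 5*q+1" unfolding pascal_l_def
    using c4[of n] q by (simp add: algebra_simps)
  ultimately show ?thesis by simp
qed

lemma pow16: "4*n+1 \<le> (16::nat)^n"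
proof (induction n)
  case (Suc n)
  have "4 * Suc n + 1 \<le> 16 * (4*n+1)" by simp
  also have "\<dots> \<le> 16 * 16^n" using Suc by simp
  finally show ?case by simp
qed simp

lemma l_ge: "n \<le> pascal_l (2*n)"
proof -
  have "(16::nat)^n = 2^(4*n)" by (simp add: power_mult)
  then have "4*n+1 \<le> pascal_c (4*n)" using pow16[of n] c_ge[of "4*n"] by linarith
  then have "4*n \<le> pascal_c (4*n) - 1" by linarith
  then have "4*n div 4 \<le> (pascal_c (4*n) - 1) div 4" by (rule div_le_mono)
  moreover have "2*(2*n) = 4*n" by simp
  ultimately show ?thesis unfolding pascal_l_def by simp
qed

theorem mainTheorem10:
  shows "(\<lambda>n. real (pascal_l (2 * n + 1)) / real (pascal_l (2 * n))) \<longlonglongrightarrow> 5"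
proof -
  have lim: "(\<lambda>n. 5 + 1 / real (pascal_l (2*n))) \<longlonglongrightarrow> 5 + 0"
  proof (rule tendsto_add)
    show "(\<lambda>n. 1 / real (pascal_l (2*n))) \<longlonglongrightarrow> 0"
    proof (rule tendsto_divide_0[OF tendsto_const])
      show "filterlim (\<lambda>n. real (pascal_l (2*n))) at_infinity sequentially"
        by (rule filterlim_at_top_imp_at_infinity, rule filterlim_at_top_mono[OF filterlim_real_sequentially])
           (use l_ge in auto)
    qed
  qed simp
  have ev: "\<forall>\<^sub>F n in sequentially. 5 + 1 / real (pascal_l (2*n)) = real (pascal_l (2 * n + 1)) / real (pascal_l (2 * n))"
    using eventually_ge_at_top[of 1]
  proof eventually_elim
    case (elim n)
    then have "pascal_l (2*n) > 0" using l_ge[of n] by simp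
    have "real (pascal_l (2*n+1)) = 5 * real (pascal_l (2*n)) + 1" unfolding l_rec by simp
    then show ?case using \<open>pascal_l (2*n) > 0\<close> by (simp add: field_simps)
  qed
  show ?thesis using Lim_transform_eventually[OF lim[simplified] ev] .
qed

end
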